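(* Let $E$ and $E^c=\partial\overline{\mathcal{G}}\setminus E$ be nonempty clopen subsets of $\partial\overline{\mathcal{G}}$. Let $f:\overline{\mathcal{G}}\to\mathbb{R}$ be harmonic with $f=C\ge 0$ on $E$ and $f>C$ on $E^c$. Let $\epsilon>0$, and let $t$ be a regular value of $f$ with $C<t<\min_{x\in E^c}f(x)$ and $d(x,E)<\epsilon$ whenever $f(x)\le t$. Then $f^{-1}(t)$ is a finite set of points interior to edges of $\mathcal{G}$. Let $\widetilde{\mathcal{G}}$ be the graph obtained from $\mathcal{G}$ by adding the points of $f^{-1}(t)$ as vertices and subdividing the corresponding edges, and put $\mathcal{G}_t=\widetilde{\mathcal{G}}\cap f^{-1}([t,\infty))$. Then: - $\mathcal{G}_t$ is a subgraph of $\widetilde{\mathcal{G}}$, namely a union of closed edges of $\widetilde{\mathcal{G}}$; - every point of $f^{-1}(t)$ is a boundary vertex of $\mathcal{G}_t$ (of degree one); - $\partial_\nu f(x)>0$ for every $x$ with $f(x)=t$, where $\partial_\nu$ is computed along the edge of $\mathcal{G}_t$ incident on $x$, in the direction pointing from $x$ into that edge.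
   Context: $\mathcal{G}$ is a connected, locally finite metric graph with countable vertex set and countable edge set. Each edge has a positive length and is identified with an interval. $\mathcal{G}$ carries the geodesic distance $d$, and $\overline{\mathcal{G}}$ is its metric completion. A designated set of vertices, containing all vertices of degree $1$, forms the boundary vertices. $\mathcal{G}_{int}$ is $\mathcal{G}$ minus the boundary vertices, and $\partial\overline{\mathcal{G}}=\overline{\mathcal{G}}\setminus\mathcal{G}_{int}$. Standing assumptions: $\overline{\mathcal{G}}$ is compact and $\partial\overline{\mathcal{G}}$ is totally disconnected. Clopen means open and closed in $\partial\overline{\mathcal{G}}$. A function $f:\overline{\mathcal{G}}\to\mathbb{R}$ is harmonic if it is continuous, linear on each edge, and satisfies $\sum_{e\sim v}\partial_\nu f_e(v)=0$ at every interior vertex $v$, where $\partial_\nu f_e(v)$ is the derivative of $f_e$ at $v$ in the direction from $v$ into the edge $e$. A point $x\in\mathcal{G}$ is a critical point of $f$ if $x$ is a vertex or $f'(x)=0$. A number is a critical value if its preimage contains a critical point. Values in the range of $f$ that are not critical values are regular values. *)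

theory Defs
  imports "HOL-Analysis.Analysis"
begin

text \<open>Edge e runs from src e to tgt e and is identified with the interval [0, len e]
  (s = 0 is src e, s = len e is tgt e).  bverts is the designated set of boundary vertices.\<close>
record ('v,'e) mgraph =
  verts  :: "'v set"
  edges  :: "'e set"
  src    :: "'e \<Rightarrow> 'v"
  tgt    :: "'e \<Rightarrow> 'v"
  len    :: "'e \<Rightarrow> real"
  bverts :: "'v set"

datatype ('v,'e) gpoint = Vert 'v | Inner 'e real

definition inner_points :: "('v,'e) mgraph \<Rightarrow> ('v,'e) gpoint set" where
  "inner_points G = {Inner e s | e s. e \<in> edges G \<and> 0 < s \<and> s < len G e}"

definition gpoints :: "('v,'e) mgraph \<Rightarrow> ('v,'e) gpoint set" where
  "gpoints G = Vert ` verts G \<union> inner_points G"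

definition gp :: "('v,'e) mgraph \<Rightarrow> 'e \<Rightarrow> real \<Rightarrow> ('v,'e) gpoint" where
  "gp G e s = (if s = 0 then Vert (src G e) else if s = len G e then Vert (tgt G e) else Inner e s)"

text \<open>Degree (a loop counts twice).\<close>
definition degree :: "('v,'e) mgraph \<Rightarrow> 'v \<Rightarrow> nat" where
  "degree G v = card {e \<in> edges G. src G e = v} + card {e \<in> edges G. tgt G e = v}"

inductive walk :: "('v,'e) mgraph \<Rightarrow> 'v \<Rightarrow> 'v \<Rightarrow> real \<Rightarrow> bool" for G where
  walk_nil: "u \<in> verts G \<Longrightarrow> walk G u u 0"
| walk_fwd: "e \<in> edges G \<Longrightarrow> walk G (tgt G e) w L \<Longrightarrow> walk G (src G e) w (len G e + L)"
| walk_bwd: "e \<in> edges G \<Longrightarrow> walk G (src G e) w L \<Longrightarrow> walk G (tgt G e) w (len G e + L)"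

definition vdist :: "('v,'e) mgraph \<Rightarrow> 'v \<Rightarrow> 'v \<Rightarrow> real" where
  "vdist G u w = Inf {L. walk G u w L}"

text \<open>Exits of a point to the endpoints of its edge, with the distance travelled.\<close>
fun anchors :: "('v,'e) mgraph \<Rightarrow> ('v,'e) gpoint \<Rightarrow> ('v \<times> real) set" where
  "anchors G (Vert v) = {(v, 0)}"
| "anchors G (Inner e s) = {(src G e, s), (tgt G e, len G e - s)}"

fun direct :: "('v,'e) gpoint \<Rightarrow> ('v,'e) gpoint \<Rightarrow> real set" where
  "direct (Inner e s) (Inner e' s') = (if e = e' then {\<bar>s - s'\<bar>} else {})"
| "direct _ _ = {}"

text \<open>Geodesic distance on the metric graph.\<close>
definition gdist :: "('v,'e) mgraph \<Rightarrow> ('v,'e) gpoint \<Rightarrow> ('v,'e) gpoint \<Rightarrow> real" where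
  "gdist G p q = Inf ({a + vdist G u w + b | u a w b. (u, a) \<in> anchors G p \<and> (w, b) \<in> anchors G q}
                      \<union> direct p q)"

definition metric_graph :: "('v,'e) mgraph \<Rightarrow> bool" where
  "metric_graph G \<longleftrightarrow>
     countable (verts G) \<and> countable (edges G) \<and> verts G \<noteq> {} \<and>
     (\<forall>e \<in> edges G. src G e \<in> verts G \<and> tgt G e \<in> verts G \<and> 0 < len G e) \<and>
     (\<forall>v \<in> verts G. finite {e \<in> edges G. src G e = v \<or> tgt G e = v}) \<and>
     (\<forall>u \<in> verts G. \<forall>w \<in> verts G. \<exists>L. walk G u w L) \<and>
     bverts G \<subseteq> verts G \<and> {v \<in> verts G. degree G v = 1} \<subseteq> bverts G"

definition metric_completion ::
  "('v,'e) mgraph \<Rightarrow> 'x set \<Rightarrow> ('x \<Rightarrow> 'x \<Rightarrow> real) \<Rightarrow> (('v,'e) gpoint \<Rightarrow> 'x) \<Rightarrow> bool" where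
  "metric_completion G X dX \<iota> \<longleftrightarrow>
     Metric_space X dX \<and> Metric_space.mcomplete X dX \<and>
     \<iota> ` gpoints G \<subseteq> X \<and>
     (\<forall>p \<in> gpoints G. \<forall>q \<in> gpoints G. dX (\<iota> p) (\<iota> q) = gdist G p q) \<and>
     Metric_space.mtopology X dX closure_of (\<iota> ` gpoints G) = X"

definition bdry :: "('v,'e) mgraph \<Rightarrow> 'x set \<Rightarrow> (('v,'e) gpoint \<Rightarrow> 'x) \<Rightarrow> 'x set" where
  "bdry G X \<iota> = X - \<iota> ` (gpoints G - Vert ` bverts G)"

definition totally_disconnected_in :: "'a topology \<Rightarrow> 'a set \<Rightarrow> bool" where
  "totally_disconnected_in T S \<longleftrightarrow> (\<forall>C. C \<subseteq> S \<and> connectedin T C \<longrightarrow> (\<exists>a. C \<subseteq> {a}))"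

definition efun :: "('v,'e) mgraph \<Rightarrow> (('v,'e) gpoint \<Rightarrow> 'x) \<Rightarrow> ('x \<Rightarrow> real) \<Rightarrow> 'e \<Rightarrow> real \<Rightarrow> real" where
  "efun G \<iota> f e s = f (\<iota> (gp G e s))"

text \<open>Derivative of f_e at the endpoint src e (resp. tgt e), in the direction into the edge.\<close>
definition dnu_src :: "('v,'e) mgraph \<Rightarrow> (('v,'e) gpoint \<Rightarrow> 'x) \<Rightarrow> ('x \<Rightarrow> real) \<Rightarrow> 'e \<Rightarrow> real" where
  "dnu_src G \<iota> f e = (THE D. (efun G \<iota> f e has_real_derivative D) (at 0 within {0..len G e}))"

definition dnu_tgt :: "('v,'e) mgraph \<Rightarrow> (('v,'e) gpoint \<Rightarrow> 'x) \<Rightarrow> ('x \<Rightarrow> real) \<Rightarrow> 'e \<Rightarrow> real" where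
  "dnu_tgt G \<iota> f e = - (THE D. (efun G \<iota> f e has_real_derivative D) (at (len G e) within {0..len G e}))"

definition harmonic ::
  "('v,'e) mgraph \<Rightarrow> 'x set \<Rightarrow> ('x \<Rightarrow> 'x \<Rightarrow> real) \<Rightarrow> (('v,'e) gpoint \<Rightarrow> 'x) \<Rightarrow> ('x \<Rightarrow> real) \<Rightarrow> bool" where
  "harmonic G X dX \<iota> f \<longleftrightarrow>
     continuous_map (Metric_space.mtopology X dX) euclideanreal f \<and>
     (\<forall>e \<in> edges G. \<exists>a b. \<forall>s \<in> {0..len G e}. efun G \<iota> f e s = a + b * s) \<and>
     (\<forall>v \<in> verts G - bverts G.
        (\<Sum>e \<in> {e \<in> edges G. src G e = v}. dnu_src G \<iota> f e)
      + (\<Sum>e \<in> {e \<in> edges G. tgt G e = v}. dnu_tgt G \<iota> f e) = 0)"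

definition critical_point ::
  "('v,'e) mgraph \<Rightarrow> (('v,'e) gpoint \<Rightarrow> 'x) \<Rightarrow> ('x \<Rightarrow> real) \<Rightarrow> ('v,'e) gpoint \<Rightarrow> bool" where
  "critical_point G \<iota> f x \<longleftrightarrow> x \<in> gpoints G \<and>
     ((\<exists>v. x = Vert v) \<or> (\<exists>e s. x = Inner e s \<and> deriv (efun G \<iota> f e) s = 0))"

definition critical_value ::
  "('v,'e) mgraph \<Rightarrow> (('v,'e) gpoint \<Rightarrow> 'x) \<Rightarrow> ('x \<Rightarrow> real) \<Rightarrow> real \<Rightarrow> bool" where
  "critical_value G \<iota> f c \<longleftrightarrow> (\<exists>x. critical_point G \<iota> f x \<and> f (\<iota> x) = c)"

definition regular_value ::
  "('v,'e) mgraph \<Rightarrow> 'x set \<Rightarrow> (('v,'e) gpoint \<Rightarrow> 'x) \<Rightarrow> ('x \<Rightarrow> real) \<Rightarrow> real \<Rightarrow> bool" where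
  "regular_value G X \<iota> f c \<longleftrightarrow> c \<in> f ` X \<and> \<not> critical_value G \<iota> f c"

definition cut_pts :: "('v,'e) mgraph \<Rightarrow> (('v,'e) gpoint \<Rightarrow> 'x) \<Rightarrow> ('x \<Rightarrow> real) \<Rightarrow> real \<Rightarrow> 'e \<Rightarrow> real set" where
  "cut_pts G \<iota> f t e = {s. 0 < s \<and> s < len G e \<and> efun G \<iota> f e s = t}"

definition nodes :: "('v,'e) mgraph \<Rightarrow> (('v,'e) gpoint \<Rightarrow> 'x) \<Rightarrow> ('x \<Rightarrow> real) \<Rightarrow> real \<Rightarrow> 'e \<Rightarrow> real set" where
  "nodes G \<iota> f t e = {0, len G e} \<union> cut_pts G \<iota> f t e"

text \<open>Edges of the subdivided graph Gtilde: (e, a, b) is the piece [a,b] of edge e between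
  consecutive subdivision points.\<close>
definition sub_edges :: "('v,'e) mgraph \<Rightarrow> (('v,'e) gpoint \<Rightarrow> 'x) \<Rightarrow> ('x \<Rightarrow> real) \<Rightarrow> real \<Rightarrow> ('e \<times> real \<times> real) set" where
  "sub_edges G \<iota> f t = {(e, a, b) | e a b. e \<in> edges G \<and> a < b \<and>
      a \<in> nodes G \<iota> f t e \<and> b \<in> nodes G \<iota> f t e \<and> (\<forall>c \<in> nodes G \<iota> f t e. \<not> (a < c \<and> c < b))}"

fun sub_edge_set :: "('v,'e) mgraph \<Rightarrow> ('e \<times> real \<times> real) \<Rightarrow> ('v,'e) gpoint set" where
  "sub_edge_set G (e, a, b) = gp G e ` {a..b}"

fun sub_left :: "('v,'e) mgraph \<Rightarrow> ('e \<times> real \<times> real) \<Rightarrow> ('v,'e) gpoint" where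
  "sub_left G (e, a, b) = gp G e a"

fun sub_right :: "('v,'e) mgraph \<Rightarrow> ('e \<times> real \<times> real) \<Rightarrow> ('v,'e) gpoint" where
  "sub_right G (e, a, b) = gp G e b"

definition Gt_edges :: "('v,'e) mgraph \<Rightarrow> (('v,'e) gpoint \<Rightarrow> 'x) \<Rightarrow> ('x \<Rightarrow> real) \<Rightarrow> real \<Rightarrow> ('e \<times> real \<times> real) set" where
  "Gt_edges G \<iota> f t = {\<sigma> \<in> sub_edges G \<iota> f t. \<forall>x \<in> sub_edge_set G \<sigma>. t \<le> f (\<iota> x)}"

definition Gt_degree :: "('v,'e) mgraph \<Rightarrow> (('v,'e) gpoint \<Rightarrow> 'x) \<Rightarrow> ('x \<Rightarrow> real) \<Rightarrow> real \<Rightarrow> ('v,'e) gpoint \<Rightarrow> nat" where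
  "Gt_degree G \<iota> f t x = card {\<sigma> \<in> Gt_edges G \<iota> f t. sub_left G \<sigma> = x}
                        + card {\<sigma> \<in> Gt_edges G \<iota> f t. sub_right G \<sigma> = x}"

text \<open>Derivative of f at the left (resp. right) endpoint of a piece (e,a,b), in the direction
  pointing from that endpoint into the piece.\<close>
fun dnu_left :: "('v,'e) mgraph \<Rightarrow> (('v,'e) gpoint \<Rightarrow> 'x) \<Rightarrow> ('x \<Rightarrow> real) \<Rightarrow> ('e \<times> real \<times> real) \<Rightarrow> real" where
  "dnu_left G \<iota> f (e, a, b) = (THE D. (efun G \<iota> f e has_real_derivative D) (at a within {a..b}))"

fun dnu_right :: "('v,'e) mgraph \<Rightarrow> (('v,'e) gpoint \<Rightarrow> 'x) \<Rightarrow> ('x \<Rightarrow> real) \<Rightarrow> ('e \<times> real \<times> real) \<Rightarrow> real" where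
  "dnu_right G \<iota> f (e, a, b) = - (THE D. (efun G \<iota> f e has_real_derivative D) (at b within {a..b}))"

end

theory Submission
  imports Defs
begin

lemma crossing:
  fixes \<alpha> \<beta> s r t :: real
  assumes "\<alpha> + \<beta> * s > t" "\<alpha> + \<beta> * r < t"
  shows "\<exists>c. min s r < c \<and> c < max s r \<and> \<alpha> + \<beta> * c = t"
proof -
  have b: "\<beta> \<noteq> 0" using assms by auto
  define c where "c = s + (t - (\<alpha> + \<beta> * s))/\<beta>"
  have ct: "\<alpha> + \<beta> * c = t" using b by (simp add: c_def field_simps)
  show ?thesis
  proof (cases "s < r")
    case True
    then have "\<beta> < 0" using assms
      by (smt (verit, best) mult_le_cancel_left)
    moreover have "\<beta> * c < \<beta> * s" "\<beta> * c > \<beta> * r" using ct assms by auto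
    ultimately have "s < c" "c < r" by (auto simp: mult_less_cancel_left)
    then show ?thesis using True ct by auto
  next
    case False
    then have sr: "r < s" using assms by (cases "r = s") auto
    then have "\<beta> > 0" using assms
      by (smt (verit, best) mult_le_cancel_left)
    moreover have "\<beta> * c < \<beta> * s" "\<beta> * c > \<beta> * r" using ct assms by auto
    ultimately have "c < s" "r < c" by (auto simp: mult_less_cancel_left)
    then show ?thesis using sr ct by auto
  qed
qed

lemma sub_edges_iff: "(e,a,b) \<in> sub_edges G \<iota> f t \<longleftrightarrow> e \<in> edges G \<and> a < b \<and> a \<in> nodes G \<iota> f t e
   \<and> b \<in> nodes G \<iota> f t e \<and> (\<forall>c\<in>nodes G \<iota> f t e. \<not>(a<c \<and> c<b))"
  by (simp add: sub_edges_def)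

lemma sub_edges_nocut:
  assumes "e \<in> edges G" "0 < len G e" "cut_pts G \<iota> f t e = {}"
  shows "(e,a,b) \<in> sub_edges G \<iota> f t \<longleftrightarrow> a = 0 \<and> b = len G e"
proof -
  have n: "nodes G \<iota> f t e = {0, len G e}" using assms(3) by (simp add: nodes_def)
  show ?thesis unfolding sub_edges_iff n using assms(1,2) by auto
qed

lemma sub_edges_cut:
  assumes "e \<in> edges G" "0 < c" "c < len G e" "cut_pts G \<iota> f t e = {c}"
  shows "(e,a,b) \<in> sub_edges G \<iota> f t \<longleftrightarrow> (a = 0 \<and> b = c) \<or> (a = c \<and> b = len G e)"
proof -
  have n: "nodes G \<iota> f t e = {0, c, len G e}" using assms(4) by (auto simp: nodes_def)
  show ?thesis unfolding sub_edges_iff n using assms(1,2,3) by auto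
qed

lemma gp_eq_Inner: "gp G e' a = Inner e s \<Longrightarrow> e' = e \<and> a = s \<and> a \<noteq> 0 \<and> a \<noteq> len G e'"
  by (auto simp: gp_def split: if_splits)

lemma walk_nonneg:
  assumes "\<forall>e\<in>edges G. 0 < len G e" "walk G u w L" shows "0 \<le> L"
  using assms(2) by induction (use assms(1) in auto)

lemma lin_deriv:
  fixes g :: "real \<Rightarrow> real"
  assumes "\<forall>s\<in>{0..l}. g s = \<alpha> + \<beta> * s" "0 \<le> a" "a < b" "b \<le> l"
  shows "(THE D. (g has_real_derivative D) (at a within {a..b})) = \<beta>"
    and "(THE D. (g has_real_derivative D) (at b within {a..b})) = \<beta>"
proof -
  have eq: "\<And>x. x \<in> {a..b} \<Longrightarrow> (\<lambda>s. \<alpha> + \<beta> * s) x = g x" using assms by auto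
  have d0: "\<And>y. ((\<lambda>s. \<alpha> + \<beta> * s) has_real_derivative \<beta>) (at y within {a..b})"
    by (auto intro!: derivative_eq_intros)
  have da: "(g has_real_derivative \<beta>) (at a within {a..b})"
    by (rule has_field_derivative_transform_within[OF d0, of 1]) (use eq assms in auto)
  have db: "(g has_real_derivative \<beta>) (at b within {a..b})"
    by (rule has_field_derivative_transform_within[OF d0, of 1]) (use eq assms in auto)
  have na: "at a within {a..b} \<noteq> bot"
    using assms(3) by (simp add: at_within_Icc_at_right)
  have nb: "at b within {a..b} \<noteq> bot"
    using assms(3) by (simp add: at_within_Icc_at_left)
  show "(THE D. (g has_real_derivative D) (at a within {a..b})) = \<beta>"
    using da has_field_derivative_unique[OF _ _ na] by blast
  show "(THE D. (g has_real_derivative D) (at b within {a..b})) = \<beta>"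
    using db has_field_derivative_unique[OF _ _ nb] by blast
qed

locale lsetting =
  fixes G :: "('v,'e) mgraph" and \<iota> :: "('v,'e) gpoint \<Rightarrow> 'x" and f :: "'x \<Rightarrow> real" and t :: real
  assumes mg: "metric_graph G"
  and lin: "\<forall>e\<in>edges G. \<exists>\<alpha> \<beta>. \<forall>s\<in>{0..len G e}. efun G \<iota> f e s = \<alpha> + \<beta> * s"
  and vne: "\<forall>v\<in>verts G. f (\<iota> (Vert v)) \<noteq> t"
begin

abbreviation "ef \<equiv> efun G \<iota> f"
abbreviation "cp \<equiv> cut_pts G \<iota> f t"
abbreviation "SE \<equiv> sub_edges G \<iota> f t"
abbreviation "GE \<equiv> Gt_edges G \<iota> f t"

lemma edge_basic: assumes "e \<in> edges G" shows "0 < len G e" "src G e \<in> verts G" "tgt G e \<in> verts G"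
  using mg assms by (auto simp: metric_graph_def)

lemma ends: assumes "e \<in> edges G" shows "ef e 0 \<noteq> t" "ef e (len G e) \<noteq> t"
  using vne edge_basic[OF assms] by (auto simp: efun_def gp_def)

lemma edge_cases:
  assumes e: "e \<in> edges G"
  obtains \<alpha> \<beta> where "\<forall>s\<in>{0..len G e}. ef e s = \<alpha> + \<beta> * s" "cp e = {}"
  | \<alpha> \<beta> c where "\<forall>s\<in>{0..len G e}. ef e s = \<alpha> + \<beta> * s" "cp e = {c}" "0 < c" "c < len G e"
      "\<beta> \<noteq> 0" "\<alpha> + \<beta> * c = t"
proof -
  obtain \<alpha> \<beta> where l: "\<forall>s\<in>{0..len G e}. ef e s = \<alpha> + \<beta> * s" using lin e by blast
  show ?thesis
  proof (cases "cp e = {}")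
    case True then show ?thesis using that(1)[OF l] by blast
  next
    case False
    then obtain c where c: "c \<in> cp e" by blast
    then have c1: "0 < c" "c < len G e" "\<alpha> + \<beta> * c = t" using l by (auto simp: cut_pts_def)
    have b: "\<beta> \<noteq> 0"
    proof
      assume "\<beta> = 0"
      then have "ef e 0 = t" using l c1 by auto
      then show False using ends[OF e] by simp
    qed
    have "cp e = {c}"
    proof
      show "{c} \<subseteq> cp e" using c by auto
      show "cp e \<subseteq> {c}"
      proof
        fix x assume "x \<in> cp e"
        then have "\<alpha> + \<beta> * x = t" using l by (auto simp: cut_pts_def)
        then show "x \<in> {c}" using c1 b by auto
      qed
    qed
    then show ?thesis using that(2)[OF l _ c1(1,2) b c1(3)] by blast
  qed
qed

lemma Gt_I: "(e,a,b) \<in> SE \<Longrightarrow> \<forall>r\<in>{a..b}. t \<le> ef e r \<Longrightarrow> (e,a,b) \<in> GE"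
  by (auto simp: Gt_edges_def efun_def)

lemma Gt_D: "(e,a,b) \<in> GE \<Longrightarrow> r \<in> {a..b} \<Longrightarrow> t \<le> ef e r"
  by (auto simp: Gt_edges_def efun_def)

lemma no_cross:
  assumes l: "\<forall>s\<in>{0..len G e}. ef e s = \<alpha> + \<beta> * s" and ab: "0 \<le> a" "b \<le> len G e"
    and nc: "\<forall>c. a < c \<and> c < b \<longrightarrow> \<alpha> + \<beta> * c \<noteq> t"
    and p: "p \<in> {a..b}" "\<alpha> + \<beta> * p > t"
  shows "\<forall>r\<in>{a..b}. t \<le> ef e r"
proof
  fix r assume r: "r \<in> {a..b}"
  show "t \<le> ef e r"
  proof (rule ccontr)
    assume "\<not> ?thesis"
    then have "\<alpha> + \<beta> * r < t" using l r ab by auto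
    then obtain c where "min p r < c" "c < max p r" "\<alpha> + \<beta> * c = t" using crossing[OF p(2)] by blast
    moreover have "a \<le> min p r" "max p r \<le> b" using p(1) r by auto
    ultimately have "a < c" "c < b" "\<alpha> + \<beta> * c = t" by linarith+
    then show False using nc by blast
  qed
qed

lemma cover_pos:
  assumes e: "e \<in> edges G" and s: "0 \<le> s" "s \<le> len G e" and gt: "ef e s > t"
  shows "\<exists>\<sigma>\<in>GE. gp G e s \<in> sub_edge_set G \<sigma>"
  using edge_cases[OF e]
proof cases
  case (1 \<alpha> \<beta>)
  have "(e,0,len G e) \<in> SE" using sub_edges_nocut[OF e edge_basic(1)[OF e] 1(2)] by simp
  moreover have "\<forall>r\<in>{0..len G e}. t \<le> ef e r"
  proof (rule no_cross[OF 1(1)])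
    show "\<forall>c. 0 < c \<and> c < len G e \<longrightarrow> \<alpha> + \<beta> * c \<noteq> t" using 1 by (auto simp: cut_pts_def)
  qed (use 1 s gt in auto)
  ultimately have "(e,0,len G e) \<in> GE" by (rule Gt_I)
  moreover have "gp G e s \<in> sub_edge_set G (e,0,len G e)" using s by auto
  ultimately show ?thesis by blast
next
  case (2 \<alpha> \<beta> c)
  have sc: "s \<noteq> c" using gt 2 s by auto
  show ?thesis
  proof (cases "s < c")
    case True
    have "(e,0,c) \<in> SE" using sub_edges_cut[OF e 2(3,4,2)] by simp
    moreover have "\<forall>r\<in>{0..c}. t \<le> ef e r"
    proof (rule no_cross[OF 2(1)])
      show "\<forall>x. 0 < x \<and> x < c \<longrightarrow> \<alpha> + \<beta> * x \<noteq> t" using 2 by (auto simp: cut_pts_def)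
    qed (use 2 s gt True in auto)
    ultimately have "(e,0,c) \<in> GE" by (rule Gt_I)
    moreover have "gp G e s \<in> sub_edge_set G (e,0,c)" using s True by auto
    ultimately show ?thesis by blast
  next
    case False
    have "(e,c,len G e) \<in> SE" using sub_edges_cut[OF e 2(3,4,2)] by simp
    moreover have "\<forall>r\<in>{c..len G e}. t \<le> ef e r"
    proof (rule no_cross[OF 2(1)])
      show "\<forall>x. c < x \<and> x < len G e \<longrightarrow> \<alpha> + \<beta> * x \<noteq> t" using 2 by (auto simp: cut_pts_def)
    qed (use 2 s gt False in auto)
    ultimately have "(e,c,len G e) \<in> GE" by (rule Gt_I)
    moreover have "gp G e s \<in> sub_edge_set G (e,c,len G e)" using s False by auto
    ultimately show ?thesis by blast
  qed
qed


lemma gp_Inner: "0 < s \<Longrightarrow> s < len G e \<Longrightarrow> gp G e s = Inner e s"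
  by (simp add: gp_def)

lemma SE_bounds:
  assumes "(e,a,b) \<in> SE"
  shows "e \<in> edges G" "0 \<le> a" "a < b" "b \<le> len G e"
    "a = 0 \<or> a \<in> cp e \<or> a = len G e" "b = 0 \<or> b \<in> cp e \<or> b = len G e"
  using assms edge_basic[of e] unfolding sub_edges_iff nodes_def cut_pts_def by auto

lemma cover_eq:
  assumes e: "e \<in> edges G" and s: "0 < s" "s < len G e" and eq: "ef e s = t"
  shows "\<exists>\<sigma>\<in>GE. Inner e s \<in> sub_edge_set G \<sigma>"
  using edge_cases[OF e]
proof cases
  case (1 \<alpha> \<beta>)
  then show ?thesis using s eq by (auto simp: cut_pts_def)
next
  case (2 \<alpha> \<beta> c)
  have sc: "s = c" using 2 s eq by (auto simp: cut_pts_def)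
  show ?thesis
  proof (cases "\<beta> > 0")
    case True
    have "(e,s,len G e) \<in> SE" using sub_edges_cut[OF e 2(3,4,2)] sc by simp
    moreover have "\<forall>r\<in>{s..len G e}. t \<le> ef e r"
    proof
      fix r assume r: "r \<in> {s..len G e}"
      have "\<beta> * s \<le> \<beta> * r" using True r by (auto intro: mult_left_mono)
      then show "t \<le> ef e r" using 2 r s sc by auto
    qed
    ultimately have "(e,s,len G e) \<in> GE" by (rule Gt_I)
    moreover have "Inner e s \<in> sub_edge_set G (e,s,len G e)"
      using s gp_Inner[OF s] by (auto intro: image_eqI[where x=s])
    ultimately show ?thesis by blast
  next
    case False
    then have bn: "\<beta> < 0" using 2 by auto
    have "(e,0,s) \<in> SE" using sub_edges_cut[OF e 2(3,4,2)] sc by simp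
    moreover have "\<forall>r\<in>{0..s}. t \<le> ef e r"
    proof
      fix r assume r: "r \<in> {0..s}"
      have "\<beta> * s \<le> \<beta> * r" using bn r by (auto intro: mult_left_mono_neg)
      then show "t \<le> ef e r" using 2 r s sc by auto
    qed
    ultimately have "(e,0,s) \<in> GE" by (rule Gt_I)
    moreover have "Inner e s \<in> sub_edge_set G (e,0,s)"
      using s gp_Inner[OF s] by (auto intro: image_eqI[where x=s])
    ultimately show ?thesis by blast
  qed
qed

lemma degree_one:
  assumes e: "e \<in> edges G" and s: "0 < s" "s < len G e" and eq: "ef e s = t"
  shows "Gt_degree G \<iota> f t (Inner e s) = 1"
  using edge_cases[OF e]
proof cases
  case (1 \<alpha> \<beta>)
  then show ?thesis using s eq by (auto simp: cut_pts_def)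
next
  case (2 \<alpha> \<beta> c)
  have sc: "s = c" using 2 s eq by (auto simp: cut_pts_def)
  have lenv: "ef e (len G e) = \<alpha> + \<beta> * len G e" "ef e 0 = \<alpha>" using 2(1) s by auto
  have SEs: "\<And>a b. (e,a,b) \<in> SE \<longleftrightarrow> (a = 0 \<and> b = s) \<or> (a = s \<and> b = len G e)"
    using sub_edges_cut[OF e 2(3,4,2)] sc by simp
  have up: "(e,s,len G e) \<in> GE \<longleftrightarrow> \<beta> > 0"
  proof
    assume "(e,s,len G e) \<in> GE"
    then have "t \<le> ef e (len G e)" using s by (intro Gt_D) auto
    then have "\<beta> * s \<le> \<beta> * len G e" using lenv 2 sc by auto
    then show "\<beta> > 0" using 2(5) s by (smt (verit) mult_less_cancel_left)
  next
    assume bp: "\<beta> > 0"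
    have "\<forall>r\<in>{s..len G e}. t \<le> ef e r"
    proof
      fix r assume r: "r \<in> {s..len G e}"
      have "\<beta> * s \<le> \<beta> * r" using bp r by (auto intro: mult_left_mono)
      then show "t \<le> ef e r" using 2 r s sc by auto
    qed
    then show "(e,s,len G e) \<in> GE" using SEs by (intro Gt_I) auto
  qed
  have down: "(e,0,s) \<in> GE \<longleftrightarrow> \<beta> < 0"
  proof
    assume "(e,0,s) \<in> GE"
    then have "t \<le> ef e 0" using s by (intro Gt_D) auto
    then have "\<beta> * s \<le> 0" using lenv 2 sc by auto
    then show "\<beta> < 0" using 2(5) s by (smt (verit) mult_pos_pos)
  next
    assume bn: "\<beta> < 0"
    have "\<forall>r\<in>{0..s}. t \<le> ef e r"
    proof
      fix r assume r: "r \<in> {0..s}"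
      have "\<beta> * s \<le> \<beta> * r" using bn r by (auto intro: mult_left_mono_neg)
      then show "t \<le> ef e r" using 2 r s sc by auto
    qed
    then show "(e,0,s) \<in> GE" using SEs by (intro Gt_I) auto
  qed
  have L: "{\<sigma>\<in>GE. sub_left G \<sigma> = Inner e s} = (if \<beta> > 0 then {(e,s,len G e)} else {})"
  proof (rule set_eqI)
    fix \<sigma> :: "'e \<times> real \<times> real"
    obtain e' a b where sg: "\<sigma> = (e',a,b)" by (cases \<sigma>)
    have "(\<sigma>\<in>GE \<and> sub_left G \<sigma> = Inner e s) \<longleftrightarrow> (\<sigma> = (e,s,len G e) \<and> \<beta> > 0)"
    proof
      assume h: "\<sigma>\<in>GE \<and> sub_left G \<sigma> = Inner e s"
      then have "e' = e" "a = s" using gp_eq_Inner[of G e' a e s] sg by auto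
      moreover have "(e,s,b) \<in> SE" using h sg `e' = e` `a = s` by (auto simp: Gt_edges_def)
      ultimately show "\<sigma> = (e,s,len G e) \<and> \<beta> > 0" using h sg SEs s up by auto
    next
      assume "\<sigma> = (e,s,len G e) \<and> \<beta> > 0"
      then show "\<sigma>\<in>GE \<and> sub_left G \<sigma> = Inner e s" using up gp_Inner[OF s] by auto
    qed
    then show "\<sigma> \<in> {\<sigma>\<in>GE. sub_left G \<sigma> = Inner e s} \<longleftrightarrow> \<sigma> \<in> (if \<beta> > 0 then {(e,s,len G e)} else {})"
      by auto
  qed
  have R: "{\<sigma>\<in>GE. sub_right G \<sigma> = Inner e s} = (if \<beta> < 0 then {(e,0,s)} else {})"
  proof (rule set_eqI)
    fix \<sigma> :: "'e \<times> real \<times> real"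
    obtain e' a b where sg: "\<sigma> = (e',a,b)" by (cases \<sigma>)
    have "(\<sigma>\<in>GE \<and> sub_right G \<sigma> = Inner e s) \<longleftrightarrow> (\<sigma> = (e,0,s) \<and> \<beta> < 0)"
    proof
      assume h: "\<sigma>\<in>GE \<and> sub_right G \<sigma> = Inner e s"
      then have "e' = e" "b = s" using gp_eq_Inner[of G e' b e s] sg by auto
      moreover have "(e,a,s) \<in> SE" using h sg `e' = e` `b = s` by (auto simp: Gt_edges_def)
      ultimately show "\<sigma> = (e,0,s) \<and> \<beta> < 0" using h sg SEs s down by auto
    next
      assume "\<sigma> = (e,0,s) \<and> \<beta> < 0"
      then show "\<sigma>\<in>GE \<and> sub_right G \<sigma> = Inner e s" using down gp_Inner[OF s] by auto
    qed
    then show "\<sigma> \<in> {\<sigma>\<in>GE. sub_right G \<sigma> = Inner e s} \<longleftrightarrow> \<sigma> \<in> (if \<beta> < 0 then {(e,0,s)} else {})"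
      by auto
  qed
  have "(if \<beta> > 0 then 1 else 0) + (if \<beta> < 0 then 1 else 0) = (1::nat)" using 2(5) by auto
  then show ?thesis unfolding Gt_degree_def L R by (simp split: if_splits)
qed

lemma dnu_pos:
  assumes sg: "\<sigma> \<in> GE"
  shows "f (\<iota> (sub_left G \<sigma>)) = t \<Longrightarrow> 0 < dnu_left G \<iota> f \<sigma>"
    and "f (\<iota> (sub_right G \<sigma>)) = t \<Longrightarrow> 0 < dnu_right G \<iota> f \<sigma>"
proof -
  obtain e a b where sd: "\<sigma> = (e,a,b)" by (cases \<sigma>)
  have SE: "(e,a,b) \<in> SE" using sg sd by (auto simp: Gt_edges_def)
  note B = SE_bounds[OF SE]
  have GEs: "(e,a,b) \<in> GE" using sg sd by simp
  obtain \<alpha> \<beta> where l: "\<forall>s\<in>{0..len G e}. ef e s = \<alpha> + \<beta> * s" using lin B(1) by blast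
  have ta: "t \<le> ef e a" and tb: "t \<le> ef e b" using Gt_D[OF GEs] B by auto
  have va: "ef e a = \<alpha> + \<beta> * a" and vb: "ef e b = \<alpha> + \<beta> * b" using l B by auto
  show "f (\<iota> (sub_left G \<sigma>)) = t \<Longrightarrow> 0 < dnu_left G \<iota> f \<sigma>"
  proof -
    assume h: "f (\<iota> (sub_left G \<sigma>)) = t"
    then have ea: "ef e a = t" using sd by (simp add: efun_def)
    have "\<beta> \<noteq> 0"
    proof
      assume "\<beta> = 0"
      then have "ef e 0 = t" using l ea va edge_basic[OF B(1)] by auto
      then show False using ends[OF B(1)] by simp
    qed
    moreover have "\<beta> * a \<le> \<beta> * b" using ea va vb tb by auto
    ultimately have "\<beta> > 0" using B(3) by (smt (verit) mult_less_cancel_left)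
    moreover have "dnu_left G \<iota> f \<sigma> = \<beta>" using sd lin_deriv(1)[OF l B(2,3,4)] by simp
    ultimately show ?thesis by simp
  qed
  show "f (\<iota> (sub_right G \<sigma>)) = t \<Longrightarrow> 0 < dnu_right G \<iota> f \<sigma>"
  proof -
    assume h: "f (\<iota> (sub_right G \<sigma>)) = t"
    then have eb: "ef e b = t" using sd by (simp add: efun_def)
    have "\<beta> \<noteq> 0"
    proof
      assume "\<beta> = 0"
      then have "ef e 0 = t" using l eb vb edge_basic[OF B(1)] by auto
      then show False using ends[OF B(1)] by simp
    qed
    moreover have "\<beta> * a \<ge> \<beta> * b" using eb va vb ta by auto
    ultimately have "\<beta> < 0" using B(3) by (smt (verit) mult_less_cancel_left)
    moreover have "dnu_right G \<iota> f \<sigma> = - \<beta>" using sd lin_deriv(2)[OF l B(2,3,4)] by simp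
    ultimately show ?thesis by simp
  qed
qed

lemma walks_exist: "u \<in> verts G \<Longrightarrow> w \<in> verts G \<Longrightarrow> \<exists>L. walk G u w L"
proof -
  have "\<forall>u\<in>verts G. \<forall>w\<in>verts G. \<exists>L. walk G u w L" using mg unfolding metric_graph_def by blast
  then show "u \<in> verts G \<Longrightarrow> w \<in> verts G \<Longrightarrow> \<exists>L. walk G u w L" by blast
qed

lemma vdist_nonneg: assumes "u \<in> verts G" "w \<in> verts G" shows "0 \<le> vdist G u w"
  unfolding vdist_def
proof (rule cInf_greatest)
  show "{L. walk G u w L} \<noteq> {}" using walks_exist[OF assms] by auto
  have pos: "\<forall>e\<in>edges G. 0 < len G e" using edge_basic(1) by blast
  show "\<And>x. x \<in> {L. walk G u w L} \<Longrightarrow> 0 \<le> x"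
    using walk_nonneg[OF pos] by blast
qed

lemma gdist_sep:
  assumes e0: "e0 \<in> edges G" "0 < s0" "s0 < len G e0" and e: "e \<in> edges G" "0 < s" "s < len G e"
    and ne: "e \<noteq> e0"
  shows "min s0 (len G e0 - s0) \<le> gdist G (Inner e0 s0) (Inner e s)"
proof -
  let ?S = "{a + vdist G u w + b | u a w b. (u, a) \<in> anchors G (Inner e0 s0) \<and> (w, b) \<in> anchors G (Inner e s)}"
  have d: "direct (Inner e0 s0) (Inner e s) = {}" using ne by simp
  have "min s0 (len G e0 - s0) \<le> Inf (?S \<union> {})"
  proof (rule cInf_greatest)
    have "s0 + vdist G (src G e0) (src G e) + s \<in> ?S"
      unfolding mem_Collect_eq
      by (rule exI[of _ "src G e0"], rule exI[of _ s0], rule exI[of _ "src G e"], rule exI[of _ s]) simp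
    then show "?S \<union> {} \<noteq> {}" by blast
    fix x assume "x \<in> ?S \<union> {}"
    then obtain u a w b where x: "x = a + vdist G u w + b" "(u, a) \<in> anchors G (Inner e0 s0)"
      "(w, b) \<in> anchors G (Inner e s)" by auto
    have "u \<in> verts G" "min s0 (len G e0 - s0) \<le> a" using x(2) edge_basic[OF e0(1)] by auto
    moreover have "w \<in> verts G" "0 \<le> b" using x(3) edge_basic[OF e(1)] e by auto
    ultimately show "min s0 (len G e0 - s0) \<le> x" using x(1) vdist_nonneg[of u w] by linarith
  qed
  then show ?thesis unfolding gdist_def d by simp
qed

lemma isolated_vertex:
  assumes v: "v \<in> verts G" and ni: "\<forall>e\<in>edges G. src G e \<noteq> v \<and> tgt G e \<noteq> v"
  shows "gpoints G = {Vert v}"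
proof -
  have w: "w = v" if wv: "w \<in> verts G" for w
  proof -
    obtain L where wk: "walk G v w L" using walks_exist[OF v wv] by blast
    have "\<not> (\<exists>e\<in>edges G. src G e = v)" "\<not> (\<exists>e\<in>edges G. tgt G e = v)" using ni by auto
    then show ?thesis using wk walk.simps[of G v w L] by auto
  qed
  have vv: "verts G = {v}" using v w by blast
  have "edges G = {}"
  proof (rule ccontr)
    assume "edges G \<noteq> {}"
    then obtain e where e: "e \<in> edges G" by blast
    then have "src G e = v" using edge_basic(2)[OF e] vv by simp
    then show False using ni e by simp
  qed
  then have "inner_points G = {}" by (simp add: inner_points_def)
  then show ?thesis using vv by (simp add: gpoints_def)
qed

end


theorem lemma3p10:
  fixes G :: "('v,'e) mgraph"
    and X :: "'x set" and dX :: "'x \<Rightarrow> 'x \<Rightarrow> real" and \<iota> :: "('v,'e) gpoint \<Rightarrow> 'x"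
    and f :: "'x \<Rightarrow> real" and E :: "'x set" and C \<epsilon> t :: real
  assumes graph: "metric_graph G"
    and completion: "metric_completion G X dX \<iota>"
    and compact: "compact_space (Metric_space.mtopology X dX)"
    and totdisc: "totally_disconnected_in (Metric_space.mtopology X dX) (bdry G X \<iota>)"
    and E_sub: "E \<subseteq> bdry G X \<iota>"
    and E_ne: "E \<noteq> {}" and Ec_ne: "bdry G X \<iota> - E \<noteq> {}"
    and E_open: "openin (subtopology (Metric_space.mtopology X dX) (bdry G X \<iota>)) E"
    and E_closed: "closedin (subtopology (Metric_space.mtopology X dX) (bdry G X \<iota>)) E"
    and harm: "harmonic G X dX \<iota> f"
    and C_nonneg: "0 \<le> C"
    and f_E: "\<forall>x \<in> E. f x = C"
    and f_Ec: "\<forall>x \<in> bdry G X \<iota> - E. C < f x"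
    and eps: "0 < \<epsilon>"
    and reg: "regular_value G X \<iota> f t"
    and t_gt: "C < t"
    and t_lt: "t < Inf (f ` (bdry G X \<iota> - E))"
    and near: "\<forall>x \<in> X. f x \<le> t \<longrightarrow> Inf ((\<lambda>y. dX x y) ` E) < \<epsilon>"
  shows "finite {x \<in> X. f x = t} \<and> {x \<in> X. f x = t} \<subseteq> \<iota> ` inner_points G
     \<and> {x \<in> gpoints G. t \<le> f (\<iota> x)} = \<Union> (sub_edge_set G ` Gt_edges G \<iota> f t)
     \<and> (\<forall>x \<in> gpoints G. f (\<iota> x) = t \<longrightarrow> Gt_degree G \<iota> f t x = 1)
     \<and> (\<forall>x \<in> gpoints G. \<forall>\<sigma> \<in> Gt_edges G \<iota> f t. f (\<iota> x) = t \<longrightarrow>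
           (sub_left G \<sigma> = x \<longrightarrow> 0 < dnu_left G \<iota> f \<sigma>)
         \<and> (sub_right G \<sigma> = x \<longrightarrow> 0 < dnu_right G \<iota> f \<sigma>))"
proof -
  have lin: "\<forall>e\<in>edges G. \<exists>\<alpha> \<beta>. \<forall>s\<in>{0..len G e}. efun G \<iota> f e s = \<alpha> + \<beta> * s"
    using harm unfolding harmonic_def by blast
  have fcont: "continuous_map (Metric_space.mtopology X dX) euclideanreal f"
    using harm unfolding harmonic_def by blast
  have vne: "\<forall>v\<in>verts G. f (\<iota> (Vert v)) \<noteq> t"
  proof
    fix v assume v: "v \<in> verts G"
    have "critical_point G \<iota> f (Vert v)" using v by (simp add: critical_point_def gpoints_def)
    then show "f (\<iota> (Vert v)) \<noteq> t" using reg unfolding regular_value_def critical_value_def by blast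
  qed
  interpret L: lsetting G \<iota> f t by unfold_locales (rule graph, rule lin, rule vne)
  have MS: "Metric_space X dX" and iso: "\<forall>p \<in> gpoints G. \<forall>q \<in> gpoints G. dX (\<iota> p) (\<iota> q) = gdist G p q"
    and iX: "\<iota> ` gpoints G \<subseteq> X"
    and clo: "Metric_space.mtopology X dX closure_of (\<iota> ` gpoints G) = X"
    using completion unfolding metric_completion_def by blast+
  interpret M: Metric_space X dX by (rule MS)
  have bdX: "bdry G X \<iota> \<subseteq> X" by (auto simp: bdry_def)
  have bdne: "f x \<noteq> t" if x: "x \<in> bdry G X \<iota>" for x
  proof (cases "x \<in> E")
    case True then show ?thesis using f_E t_gt by auto
  next
    case False
    then have xin: "x \<in> bdry G X \<iota> - E" using x by blast
    have "bdd_below (f ` (bdry G X \<iota> - E))"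
    proof (rule bdd_belowI[of _ C])
      fix y assume "y \<in> f ` (bdry G X \<iota> - E)"
      then obtain z where z: "z \<in> bdry G X \<iota> - E" "y = f z" by blast
      then have "C < y" using f_Ec by blast
      then show "C \<le> y" by simp
    qed
    then have "Inf (f ` (bdry G X \<iota> - E)) \<le> f x" using xin by (intro cInf_lower) auto
    then show ?thesis using t_lt by auto
  qed
  have Lchar: "\<exists>e s. e \<in> edges G \<and> 0 < s \<and> s < len G e \<and> x = \<iota> (Inner e s) \<and> L.ef e s = t"
    if x: "x \<in> X" "f x = t" for x
  proof -
    have "x \<notin> bdry G X \<iota>" using bdne x by blast
    then obtain p where p: "p \<in> gpoints G" "x = \<iota> p" using x unfolding bdry_def by blast
    show ?thesis
    proof (cases "p \<in> Vert ` verts G")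
      case True
      then show ?thesis using vne p x by auto
    next
      case False
      then have "p \<in> inner_points G" using p unfolding gpoints_def by blast
      then obtain e s where es: "p = Inner e s" "e \<in> edges G" "0 < s" "s < len G e"
        unfolding inner_points_def by blast
      have "L.ef e s = t" using es x p L.gp_Inner[of s e] by (simp add: efun_def)
      then show ?thesis using es p by blast
    qed
  qed
  have c2: "{x \<in> X. f x = t} \<subseteq> \<iota> ` inner_points G"
  proof
    fix x assume "x \<in> {x \<in> X. f x = t}"
    then obtain e s where "e \<in> edges G" "0 < s" "s < len G e" "x = \<iota> (Inner e s)"
      using Lchar by blast
    then show "x \<in> \<iota> ` inner_points G" unfolding inner_points_def by blast
  qed
  define LS where "LS = {x \<in> X. f x = t}"
  have isol: "\<exists>r>0. \<forall>y\<in>LS. dX x y < r \<longrightarrow> y = x" if x: "x \<in> LS" for x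
  proof -
    obtain e0 s0 where e0: "e0 \<in> edges G" "0 < s0" "s0 < len G e0" "x = \<iota> (Inner e0 s0)" "L.ef e0 s0 = t"
      using Lchar x unfolding LS_def by blast
    define r where "r = min s0 (len G e0 - s0)"
    have rpos: "r > 0" using e0 by (simp add: r_def)
    have "\<forall>y\<in>LS. dX x y < r \<longrightarrow> y = x"
    proof (intro ballI impI)
      fix y assume y: "y \<in> LS" "dX x y < r"
      obtain e s where es: "e \<in> edges G" "0 < s" "s < len G e" "y = \<iota> (Inner e s)" "L.ef e s = t"
        using Lchar y unfolding LS_def by blast
      have g0: "Inner e0 s0 \<in> gpoints G" "Inner e s \<in> gpoints G"
        using e0 es by (auto simp: gpoints_def inner_points_def)
      show "y = x"
      proof (cases "e = e0")
        case False
        have "r \<le> gdist G (Inner e0 s0) (Inner e s)"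
          unfolding r_def by (rule L.gdist_sep) (use e0 es False in auto)
        then show ?thesis using y(2) iso g0 e0(4) es(4) by auto
      next
        case True
        have "s \<in> L.cp e0" "s0 \<in> L.cp e0" using e0 es True by (auto simp: cut_pts_def)
        then have "s = s0"
          using L.edge_cases[OF e0(1)] by (metis empty_iff singletonD)
        then show ?thesis using True e0(4) es(4) by simp
      qed
    qed
    then show ?thesis using rpos by blast
  qed
  have closedLS: "closedin M.mtopology LS"
  proof -
    have "closedin M.mtopology {x \<in> topspace M.mtopology. f x \<in> {t}}"
      by (rule closedin_continuous_map_preimage[OF fcont]) (simp add: closed_closedin[symmetric])
    then show ?thesis by (simp add: LS_def)
  qed
  have compLS: "compactin M.mtopology LS" by (rule closedin_compact_space[OF compact closedLS])
  have c1: "finite LS"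
  proof -
    obtain r where r: "\<And>x. x \<in> LS \<Longrightarrow> r x > 0 \<and> (\<forall>y\<in>LS. dX x y < r x \<longrightarrow> y = x)"
      using isol by metis
    let ?U = "(\<lambda>x. M.mball x (r x)) ` LS"
    have "\<forall>U\<in>?U. openin M.mtopology U" by auto
    moreover have "LS \<subseteq> \<Union>?U"
    proof
      fix x assume x: "x \<in> LS"
      then have "x \<in> M.mball x (r x)" using r[OF x] by (auto simp: LS_def)
      then show "x \<in> \<Union>?U" using x by blast
    qed
    ultimately obtain F where F: "finite F" "F \<subseteq> ?U" "LS \<subseteq> \<Union>F"
      using compLS unfolding compactin_def by meson
    then obtain K where K: "K \<subseteq> LS" "finite K" "F = (\<lambda>x. M.mball x (r x)) ` K"
      by (meson finite_subset_image)
    have "LS \<subseteq> K"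
    proof
      fix y assume y: "y \<in> LS"
      then obtain x where x: "x \<in> K" "y \<in> M.mball x (r x)" using F K by blast
      then have "dX x y < r x" by simp
      then have "y = x" using r[of x] x K y by blast
      then show "y \<in> K" using x by simp
    qed
    then show ?thesis using K(2) finite_subset by blast
  qed
  have c3: "{x \<in> gpoints G. t \<le> f (\<iota> x)} = \<Union> (sub_edge_set G ` Gt_edges G \<iota> f t)"
  proof
    show "\<Union> (sub_edge_set G ` Gt_edges G \<iota> f t) \<subseteq> {x \<in> gpoints G. t \<le> f (\<iota> x)}"
    proof
      fix x assume "x \<in> \<Union> (sub_edge_set G ` Gt_edges G \<iota> f t)"
      then obtain e a b where s: "(e,a,b) \<in> Gt_edges G \<iota> f t" "x \<in> sub_edge_set G (e,a,b)"
        by auto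
      then obtain r where r: "r \<in> {a..b}" "x = gp G e r" by auto
      have SE: "(e,a,b) \<in> L.SE" using s by (auto simp: Gt_edges_def)
      note B = L.SE_bounds[OF SE]
      have "x \<in> gpoints G"
        using r B L.edge_basic[OF B(1)] by (auto simp: gp_def gpoints_def inner_points_def)
      moreover have "t \<le> f (\<iota> x)" using L.Gt_D[OF s(1) r(1)] r by (simp add: efun_def)
      ultimately show "x \<in> {x \<in> gpoints G. t \<le> f (\<iota> x)}" by blast
    qed
    show "{x \<in> gpoints G. t \<le> f (\<iota> x)} \<subseteq> \<Union> (sub_edge_set G ` Gt_edges G \<iota> f t)"
    proof
      fix x assume x: "x \<in> {x \<in> gpoints G. t \<le> f (\<iota> x)}"
      then have xg: "x \<in> gpoints G" and tx: "t \<le> f (\<iota> x)" by auto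
      show "x \<in> \<Union> (sub_edge_set G ` Gt_edges G \<iota> f t)"
      proof (cases "x \<in> Vert ` verts G")
        case True
        then obtain v where v: "v \<in> verts G" "x = Vert v" by blast
        have gt: "t < f (\<iota> x)" using tx vne v by force
        have "\<exists>e\<in>edges G. src G e = v \<or> tgt G e = v"
        proof (rule ccontr)
          assume "\<not> ?thesis"
          then have "gpoints G = {Vert v}" using L.isolated_vertex[OF v(1)] by blast
          then have "X = M.mtopology closure_of {\<iota> (Vert v)}" using clo by simp
          also have "\<dots> = {\<iota> (Vert v)}"
          proof -
            have "t1_space M.mtopology" by (rule Hausdorff_imp_t1_space[OF M.Hausdorff_space_mtopology])
            moreover have "\<iota> (Vert v) \<in> topspace M.mtopology" using iX v by (auto simp: gpoints_def)
            ultimately have "closedin M.mtopology {\<iota> (Vert v)}"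
              unfolding t1_space_closedin_singleton by (rule bspec)
            then show ?thesis by (simp add: closure_of_eq)
          qed
          finally have Xe: "X = {\<iota> (Vert v)}" .
          have "bdry G X \<iota> \<subseteq> {\<iota> (Vert v)}" using bdX Xe by blast
          then show False using E_ne Ec_ne E_sub by blast
        qed
        then obtain e where e: "e \<in> edges G" "src G e = v \<or> tgt G e = v" by blast
        have lp: "0 < len G e" using L.edge_basic[OF e(1)] by simp
        show ?thesis
        proof (cases "src G e = v")
          case True
          have "gp G e 0 = x" using True v by (simp add: gp_def)
          moreover have "L.ef e 0 > t" using gt True v by (simp add: efun_def gp_def)
          ultimately show ?thesis using L.cover_pos[OF e(1), of 0] lp by force
        next
          case False
          then have tg: "tgt G e = v" using e by blast
          have "gp G e (len G e) = x" using tg v lp by (simp add: gp_def)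
          moreover have "L.ef e (len G e) > t" using gt tg v lp by (simp add: efun_def gp_def)
          ultimately show ?thesis using L.cover_pos[OF e(1), of "len G e"] lp by force
        qed
      next
        case False
        then have "x \<in> inner_points G" using xg unfolding gpoints_def by blast
        then obtain e s where es: "x = Inner e s" "e \<in> edges G" "0 < s" "s < len G e"
          unfolding inner_points_def by blast
        have efx: "L.ef e s = f (\<iota> x)" using es L.gp_Inner[of s e] by (simp add: efun_def)
        show ?thesis
        proof (cases "f (\<iota> x) = t")
          case True
          then show ?thesis using L.cover_eq[OF es(2,3,4)] efx es(1) by force
        next
          case False
          then have "L.ef e s > t" using efx tx by simp
          then show ?thesis using L.cover_pos[OF es(2), of s] es L.gp_Inner[of s e] by force
        qed
      qed
    qed
  qed
  have inner_of: "\<exists>e s. x = Inner e s \<and> e \<in> edges G \<and> 0 < s \<and> s < len G e \<and> L.ef e s = t"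
    if x: "x \<in> gpoints G" "f (\<iota> x) = t" for x
  proof -
    have "x \<notin> Vert ` verts G" using x vne by auto
    then have "x \<in> inner_points G" using x unfolding gpoints_def by blast
    then obtain e s where es: "x = Inner e s" "e \<in> edges G" "0 < s" "s < len G e"
      unfolding inner_points_def by blast
    have "L.ef e s = t" using es x L.gp_Inner[of s e] by (simp add: efun_def)
    then show ?thesis using es by blast
  qed
  have c4: "\<forall>x \<in> gpoints G. f (\<iota> x) = t \<longrightarrow> Gt_degree G \<iota> f t x = 1"
  proof (intro ballI impI)
    fix x assume "x \<in> gpoints G" "f (\<iota> x) = t"
    then obtain e s where "x = Inner e s" "e \<in> edges G" "0 < s" "s < len G e" "L.ef e s = t"
      using inner_of by blast
    then show "Gt_degree G \<iota> f t x = 1" using L.degree_one by blast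
  qed
  have c5: "\<forall>x \<in> gpoints G. \<forall>\<sigma> \<in> Gt_edges G \<iota> f t. f (\<iota> x) = t \<longrightarrow>
           (sub_left G \<sigma> = x \<longrightarrow> 0 < dnu_left G \<iota> f \<sigma>)
         \<and> (sub_right G \<sigma> = x \<longrightarrow> 0 < dnu_right G \<iota> f \<sigma>)"
    using L.dnu_pos by blast
  show ?thesis using c1 c2 c3 c4 c5 unfolding LS_def by blast
qed

end
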